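(* Consider the system $x_{k+1}=Ax_k+Bw_k$, $y^i_k=C^ix_k+D^iv^i_k$ for $i\in\mathcal V=\{1,\dots,N\}$, $k\in\mathbb Z_{\ge 0}$, with $x_0\in[\underline x_0,\overline x_0]$, $w_k\in[\underline w,\overline w]$ and $v^i_k\in[\underline v^i,\overline v^i]$ for all $k$ and $i$. Let agents communicate over a directed graph $G=(\mathcal V,E)$, and let the Distributed Interval Observer (DIO), described in the context, be run with arbitrary gains $L^i,\Gamma^i\in\mathbb R^{n\times m_i}$ ($i\in\mathcal V$) and an arbitrary number $d\in\mathbb N$ of network-update iterations. Then the DIO is a distributed interval framer for the system: for every admissible realization of $x_0$, $(w_k)$, $(v^i_k)$, every agent $i\in\mathcal V$ and every $k\ge 0$, $\underline x^i_k\le x_k\le \overline x^i_k$.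
   Context: All inequalities between vectors are entrywise; $\max$ and $\min$ of vectors are entrywise. For a matrix $M$, $M^+$ is defined entrywise by $M^+_{ij}=\max\{M_{ij},0\}$, and $M^-=M^+-M$. $A\in\mathbb R^{n\times n}$, $B\in\mathbb R^{n\times n_w}$, $C^i\in\mathbb R^{m_i\times n}$, $D^i\in\mathbb R^{m_i\times n_v^i}$, and the bounds $\underline x_0,\overline x_0,\underline w,\overline w$ are known to all agents; agent $i$ knows $\underline v^i,\overline v^i$ and observes only its own outputs $y^i_k$. For node $i$, $\mathcal N_i=\{j:(i,j)\in E\}\cup\{i\}$, and $\mathcal N_i^d$ is the set of nodes reachable from $i$ by a directed path of length at most $d$ (including $i$). DIO: set $T^i=I_n-\Gamma^iC^i$ and $\tilde A^i=T^iA-L^iC^i$. Initialize $\underline x^i_0=\underline x_0$, $\overline x^i_0=\overline x_0$ for all $i$. For each $k\ge0$, each agent $i$ computes $\underline x^{i,0}_{k+1}=(\tilde A^i)^+\underline x^i_k-(\tilde A^i)^-\overline x^i_k+(T^iB)^+\underline w-(T^iB)^-\overline w+L^iy^i_k+\Gamma^iy^i_{k+1}-((L^iD^i)^++(\Gamma^iD^i)^+)\overline v^i+((L^iD^i)^-+(\Gamma^iD^i)^-)\underline v^i$, $\overline x^{i,0}_{k+1}=(\tilde A^i)^+\overline x^i_k-(\tilde A^i)^-\underline x^i_k+(T^iB)^+\overline w-(T^iB)^-\underline w+L^iy^i_k+\Gamma^iy^i_{k+1}-((L^iD^i)^++(\Gamma^iD^i)^+)\underline v^i+((L^iD^i)^-+(\Gamma^iD^i)^-)\overline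 v^i$, and then performs $d$ rounds of network update $\underline x^{i,t}_{k+1}=\max_{j\in\mathcal N_i}\underline x^{j,t-1}_{k+1}$, $\overline x^{i,t}_{k+1}=\min_{j\in\mathcal N_i}\overline x^{j,t-1}_{k+1}$, $t=1,\dots,d$, setting $\underline x^i_{k+1}=\underline x^{i,d}_{k+1}=\max_{j\in\mathcal N_i^d}\underline x^{j,0}_{k+1}$ and $\overline x^i_{k+1}=\overline x^{i,d}_{k+1}=\min_{j\in\mathcal N_i^d}\overline x^{j,0}_{k+1}$. *)

theory Defs
  imports Main "HOL.Real"
begin

text \<open>Vectors and matrices are represented as functions on natural-number indices;
  dimensions are carried explicitly (only indices below the stated dimension matter).\<close>

type_synonym vec = "nat \<Rightarrow> real"
type_synonym mat = "nat \<Rightarrow> nat \<Rightarrow> real"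

definition mv :: "nat \<Rightarrow> mat \<Rightarrow> vec \<Rightarrow> vec" where
  "mv p M x = (\<lambda>r. \<Sum>c<p. M r c * x c)"

definition mm :: "nat \<Rightarrow> mat \<Rightarrow> mat \<Rightarrow> mat" where
  "mm p M N = (\<lambda>r c. \<Sum>j<p. M r j * N j c)"

definition idm :: mat where
  "idm = (\<lambda>r c. if r = c then 1 else 0)"

definition mpos :: "mat \<Rightarrow> mat" where
  "mpos M = (\<lambda>r c. max (M r c) 0)"

definition mneg :: "mat \<Rightarrow> mat" where
  "mneg M = (\<lambda>r c. mpos M r c - M r c)"

definition dio_pred ::
  "nat \<Rightarrow> nat \<Rightarrow> nat \<Rightarrow> nat \<Rightarrow> mat \<Rightarrow> mat \<Rightarrow> mat \<Rightarrow> mat \<Rightarrow> mat \<Rightarrow> mat \<Rightarrow>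
   vec \<Rightarrow> vec \<Rightarrow> vec \<Rightarrow> vec \<Rightarrow> vec \<Rightarrow> vec \<Rightarrow> vec \<Rightarrow> vec \<Rightarrow> vec \<times> vec" where
  "dio_pred n nw mi nvi A B Ci Di Li Gi wl wu vl vu xl xu yk yk1 =
    (let T = (\<lambda>r c. idm r c - mm mi Gi Ci r c);
         At = (\<lambda>r c. mm n T A r c - mm mi Li Ci r c);
         TB = mm n T B;
         LD = mm mi Li Di;
         GD = mm mi Gi Di;
         P = (\<lambda>r c. mpos LD r c + mpos GD r c);
         Q = (\<lambda>r c. mneg LD r c + mneg GD r c)
     in ((\<lambda>r. mv n (mpos At) xl r - mv n (mneg At) xu r
              + mv nw (mpos TB) wl r - mv nw (mneg TB) wu r
              + mv mi Li yk r + mv mi Gi yk1 r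
              - mv nvi P vu r + mv nvi Q vl r),
         (\<lambda>r. mv n (mpos At) xu r - mv n (mneg At) xl r
              + mv nw (mpos TB) wu r - mv nw (mneg TB) wl r
              + mv mi Li yk r + mv mi Gi yk1 r
              - mv nvi P vl r + mv nvi Q vu r)))"

definition nbhd :: "(nat \<times> nat) set \<Rightarrow> nat \<Rightarrow> nat set" where
  "nbhd E i = {j. (i, j) \<in> E} \<union> {i}"

definition net_round :: "(nat \<times> nat) set \<Rightarrow> (nat \<Rightarrow> vec \<times> vec) \<Rightarrow> (nat \<Rightarrow> vec \<times> vec)" where
  "net_round E X = (\<lambda>i. ((\<lambda>r. Max ((\<lambda>j. fst (X j) r) ` nbhd E i)),
                          (\<lambda>r. Min ((\<lambda>j. snd (X j) r) ` nbhd E i))))"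

primrec dio ::
  "nat \<Rightarrow> nat \<Rightarrow> (nat \<Rightarrow> nat) \<Rightarrow> (nat \<Rightarrow> nat) \<Rightarrow> mat \<Rightarrow> mat \<Rightarrow> (nat \<Rightarrow> mat) \<Rightarrow> (nat \<Rightarrow> mat) \<Rightarrow>
   (nat \<Rightarrow> mat) \<Rightarrow> (nat \<Rightarrow> mat) \<Rightarrow> vec \<Rightarrow> vec \<Rightarrow> vec \<Rightarrow> vec \<Rightarrow> (nat \<Rightarrow> vec) \<Rightarrow> (nat \<Rightarrow> vec) \<Rightarrow>
   (nat \<times> nat) set \<Rightarrow> nat \<Rightarrow> (nat \<Rightarrow> nat \<Rightarrow> vec) \<Rightarrow> nat \<Rightarrow> nat \<Rightarrow> vec \<times> vec" where
  "dio n nw m nv A B C D L G x0l x0u wl wu vl vu E d y 0 =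
     (\<lambda>i. (x0l, x0u))"
| "dio n nw m nv A B C D L G x0l x0u wl wu vl vu E d y (Suc k) =
     (net_round E ^^ d)
       (\<lambda>i. dio_pred n nw (m i) (nv i) A B (C i) (D i) (L i) (G i) wl wu (vl i) (vu i)
              (fst (dio n nw m nv A B C D L G x0l x0u wl wu vl vu E d y k i))
              (snd (dio n nw m nv A B C D L G x0l x0u wl wu vl vu E d y k i))
              (y i k) (y i (Suc k)))"

end

theory Submission
  imports Defs
begin


lemma mv_cong: "(\<And>c. c < p \<Longrightarrow> x c = x' c) \<Longrightarrow> mv p M x r = mv p M x' r"
  unfolding mv_def by (auto intro: sum.cong)

lemma mv_mm: "mv q (mm p M N) x r = mv p M (mv q N x) r"
  unfolding mv_def mm_def
  by (simp add: sum_distrib_left sum_distrib_right mult.assoc sum.swap[of _ "{..<q}"])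

lemma mv_diff_mat: "mv p (\<lambda>r c. M r c - N r c) x r = mv p M x r - mv p N x r"
  unfolding mv_def by (simp add: left_diff_distrib sum_subtractf)

lemma mv_add_mat: "mv p (\<lambda>r c. M r c + N r c) x r = mv p M x r + mv p N x r"
  unfolding mv_def by (simp add: distrib_right sum.distrib)

lemma mv_add_vec: "mv p M (\<lambda>c. a c + b c) r = mv p M a r + mv p M b r"
  unfolding mv_def by (simp add: distrib_left sum.distrib)

lemma mv_idm: "r < p \<Longrightarrow> mv p idm x r = x r"
  unfolding mv_def idm_def
proof -
  assume "r < p"
  have "(\<Sum>c<p. (if r = c then 1 else 0) * x c) = (\<Sum>c<p. if r = c then x c else 0)"
    by (rule sum.cong) auto
  then show "(\<Sum>c<p. (if r = c then 1 else 0) * x c) = x r" using \<open>r < p\<close> by (simp add: sum.delta)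
qed

lemma mpos_mneg: "M r c = mpos M r c - mneg M r c"
  unfolding mneg_def by simp

lemma mv_lower:
  assumes "\<And>c. c < p \<Longrightarrow> xl c \<le> x c \<and> x c \<le> xu c"
  shows "mv p (mpos M) xl r - mv p (mneg M) xu r \<le> mv p M x r"
    and "mv p M x r \<le> mv p (mpos M) xu r - mv p (mneg M) xl r"
proof -
  have e: "mv p M x r = mv p (mpos M) x r - mv p (mneg M) x r"
  proof -
    have "M = (\<lambda>r c. mpos M r c - mneg M r c)" using mpos_mneg[of M] by (intro ext) simp
    then show ?thesis using mv_diff_mat[of p "mpos M" "mneg M" x r] by simp
  qed
  have p0: "\<And>c. 0 \<le> mpos M r c" and n0: "\<And>c. 0 \<le> mneg M r c"
    unfolding mneg_def mpos_def by auto
  have a: "mv p (mpos M) xl r \<le> mv p (mpos M) x r" "mv p (mpos M) x r \<le> mv p (mpos M) xu r"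
    "mv p (mneg M) xl r \<le> mv p (mneg M) x r" "mv p (mneg M) x r \<le> mv p (mneg M) xu r"
    unfolding mv_def using assms p0 n0 by (auto intro!: sum_mono mult_left_mono)
  show "mv p (mpos M) xl r - mv p (mneg M) xu r \<le> mv p M x r"
       "mv p M x r \<le> mv p (mpos M) xu r - mv p (mneg M) xl r" using e a by linarith+
qed


lemma pred_sound:
  fixes xk x1 wk vk vkn yk yk1 :: vec
  assumes r: "r < n"
    and xb: "\<And>c. c < n \<Longrightarrow> xl c \<le> xk c \<and> xk c \<le> xu c"
    and wb: "\<And>c. c < nw \<Longrightarrow> wl c \<le> wk c \<and> wk c \<le> wu c"
    and vb: "\<And>c. c < nvi \<Longrightarrow> vl c \<le> vk c \<and> vk c \<le> vu c"
    and vb1: "\<And>c. c < nvi \<Longrightarrow> vl c \<le> vkn c \<and> vkn c \<le> vu c"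
    and yo: "\<And>c. c < mi \<Longrightarrow> yk c = mv n Ci xk c + mv nvi Di vk c"
    and yo1: "\<And>c. c < mi \<Longrightarrow> yk1 c = mv n Ci x1 c + mv nvi Di vkn c"
    and dy: "\<And>c. c < n \<Longrightarrow> x1 c = mv n A xk c + mv nw B wk c"
  shows "fst (dio_pred n nw mi nvi A B Ci Di Li Gi wl wu vl vu xl xu yk yk1) r \<le> x1 r
       \<and> x1 r \<le> snd (dio_pred n nw mi nvi A B Ci Di Li Gi wl wu vl vu xl xu yk yk1) r"
proof -
  define T where "T = (\<lambda>r c. idm r c - mm mi Gi Ci r c)"
  define At where "At = (\<lambda>r c. mm n T A r c - mm mi Li Ci r c)"
  define TB where "TB = mm n T B"
  define LD where "LD = mm mi Li Di"
  define GD where "GD = mm mi Gi Di"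
  define P where "P = (\<lambda>r c. mpos LD r c + mpos GD r c)"
  define Q where "Q = (\<lambda>r c. mneg LD r c + mneg GD r c)"
  have yk: "mv mi Li yk r = mv mi Li (mv n Ci xk) r + mv nvi LD vk r"
    using mv_cong[of mi yk "\<lambda>c. mv n Ci xk c + mv nvi Di vk c" Li r] yo
    by (simp add: mv_add_vec LD_def mv_mm)
  have yk1: "mv mi Gi yk1 r = mv mi Gi (mv n Ci x1) r + mv nvi GD vkn r"
    using mv_cong[of mi yk1 "\<lambda>c. mv n Ci x1 c + mv nvi Di vkn c" Gi r] yo1
    by (simp add: mv_add_vec GD_def mv_mm)
  have Tx: "mv n T x1 r = mv n T (mv n A xk) r + mv nw TB wk r"
    using mv_cong[of n x1 "\<lambda>c. mv n A xk c + mv nw B wk c" T r] dy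
    by (simp add: mv_add_vec TB_def mv_mm)
  have Tx2: "mv n T x1 r = x1 r - mv mi Gi (mv n Ci x1) r"
    unfolding T_def mv_diff_mat mv_idm[OF r] mv_mm ..
  have Atx: "mv n At xk r = mv n T (mv n A xk) r - mv mi Li (mv n Ci xk) r"
    unfolding At_def mv_diff_mat mv_mm ..
  have key: "x1 r = mv n At xk r + mv nw TB wk r + mv mi Li yk r + mv mi Gi yk1 r
      - mv nvi LD vk r - mv nvi GD vkn r"
    using yk yk1 Tx Tx2 Atx by linarith
  have b1: "mv n (mpos At) xl r - mv n (mneg At) xu r \<le> mv n At xk r"
           "mv n At xk r \<le> mv n (mpos At) xu r - mv n (mneg At) xl r"
    using mv_lower[of n xl xk xu At r] xb by auto
  have b2: "mv nw (mpos TB) wl r - mv nw (mneg TB) wu r \<le> mv nw TB wk r"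
           "mv nw TB wk r \<le> mv nw (mpos TB) wu r - mv nw (mneg TB) wl r"
    using mv_lower[of nw wl wk wu TB r] wb by auto
  have b3: "mv nvi (mpos LD) vl r - mv nvi (mneg LD) vu r \<le> mv nvi LD vk r"
           "mv nvi LD vk r \<le> mv nvi (mpos LD) vu r - mv nvi (mneg LD) vl r"
    using mv_lower[of nvi vl vk vu LD r] vb by auto
  have b4: "mv nvi (mpos GD) vl r - mv nvi (mneg GD) vu r \<le> mv nvi GD vkn r"
           "mv nvi GD vkn r \<le> mv nvi (mpos GD) vu r - mv nvi (mneg GD) vl r"
    using mv_lower[of nvi vl vkn vu GD r] vb1 by auto
  have PQ: "mv nvi P vu r = mv nvi (mpos LD) vu r + mv nvi (mpos GD) vu r"
     "mv nvi P vl r = mv nvi (mpos LD) vl r + mv nvi (mpos GD) vl r"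
     "mv nvi Q vu r = mv nvi (mneg LD) vu r + mv nvi (mneg GD) vu r"
     "mv nvi Q vl r = mv nvi (mneg LD) vl r + mv nvi (mneg GD) vl r"
    unfolding P_def Q_def mv_add_mat by simp_all
  have fs: "fst (dio_pred n nw mi nvi A B Ci Di Li Gi wl wu vl vu xl xu yk yk1) r =
     mv n (mpos At) xl r - mv n (mneg At) xu r
              + mv nw (mpos TB) wl r - mv nw (mneg TB) wu r
              + mv mi Li yk r + mv mi Gi yk1 r
              - mv nvi P vu r + mv nvi Q vl r"
   and sn: "snd (dio_pred n nw mi nvi A B Ci Di Li Gi wl wu vl vu xl xu yk yk1) r =
     mv n (mpos At) xu r - mv n (mneg At) xl r
              + mv nw (mpos TB) wu r - mv nw (mneg TB) wl r
              + mv mi Li yk r + mv mi Gi yk1 r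
              - mv nvi P vl r + mv nvi Q vu r"
    unfolding dio_pred_def Let_def T_def At_def TB_def LD_def GD_def P_def Q_def by simp_all
  show ?thesis unfolding fs sn using key b1 b2 b3 b4 PQ by linarith
qed

lemma rounds_sound:
  assumes graph: "E \<subseteq> {1..N} \<times> {1..N}"
    and inv: "\<forall>i\<in>{1..N}. \<forall>r<n. fst (X i) r \<le> z r \<and> z r \<le> snd (X i) r"
  shows "\<forall>i\<in>{1..N}. \<forall>r<n. fst ((net_round E ^^ t) X i) r \<le> z r \<and> z r \<le> snd ((net_round E ^^ t) X i) r"
proof (induction t)
  case 0
  then show ?case using inv by simp
next
  case (Suc t)
  let ?Y = "(net_round E ^^ t) X"
  show ?case
  proof (intro ballI allI impI)
    fix i r assume i: "i \<in> {1..N}" and r: "r < n"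
    have sub: "nbhd E i \<subseteq> {1..N}" using graph i unfolding nbhd_def by auto
    have fin: "finite (nbhd E i)" using sub finite_subset by blast
    have ne: "i \<in> nbhd E i" unfolding nbhd_def by auto
    have "Max ((\<lambda>j. fst (?Y j) r) ` nbhd E i) \<le> z r"
      using fin ne sub Suc.IH r by (subst Max_le_iff) auto
    moreover have "z r \<le> Min ((\<lambda>j. snd (?Y j) r) ` nbhd E i)"
      using fin ne sub Suc.IH r by (subst Min_ge_iff) auto
    ultimately show "fst ((net_round E ^^ Suc t) X i) r \<le> z r \<and> z r \<le> snd ((net_round E ^^ Suc t) X i) r"
      by (simp add: net_round_def)
  qed
qed

theorem lemma1:
  fixes N n nw :: nat and m nv :: "nat \<Rightarrow> nat"
    and A B :: mat and C D L G :: "nat \<Rightarrow> mat"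
    and x0l x0u wl wu :: vec and vl vu :: "nat \<Rightarrow> vec"
    and E :: "(nat \<times> nat) set" and d :: nat
    and x w :: "nat \<Rightarrow> vec" and v y :: "nat \<Rightarrow> nat \<Rightarrow> vec"
  assumes graph: "E \<subseteq> {1..N} \<times> {1..N}"
    and x0_bd: "\<forall>r<n. x0l r \<le> x 0 r \<and> x 0 r \<le> x0u r"
    and w_bd: "\<forall>k. \<forall>r<nw. wl r \<le> w k r \<and> w k r \<le> wu r"
    and v_bd: "\<forall>i\<in>{1..N}. \<forall>k. \<forall>r<nv i. vl i r \<le> v i k r \<and> v i k r \<le> vu i r"
    and dyn: "\<forall>k. \<forall>r<n. x (Suc k) r = mv n A (x k) r + mv nw B (w k) r"
    and outp: "\<forall>i\<in>{1..N}. \<forall>k. \<forall>r<m i. y i k r = mv n (C i) (x k) r + mv (nv i) (D i) (v i k) r"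
  shows "\<forall>i\<in>{1..N}. \<forall>k. \<forall>r<n.
           fst (dio n nw m nv A B C D L G x0l x0u wl wu vl vu E d y k i) r \<le> x k r \<and>
           x k r \<le> snd (dio n nw m nv A B C D L G x0l x0u wl wu vl vu E d y k i) r"
proof (rule ballI, rule allI)
  fix i k assume i: "i \<in> {1..N}"
  show "\<forall>r<n. fst (dio n nw m nv A B C D L G x0l x0u wl wu vl vu E d y k i) r \<le> x k r \<and>
           x k r \<le> snd (dio n nw m nv A B C D L G x0l x0u wl wu vl vu E d y k i) r"
    using i
  proof (induction k arbitrary: i)
    case 0
    then show ?case using x0_bd by simp
  next
    case (Suc k)
    have X: "\<forall>j\<in>{1..N}. \<forall>r<n. fst (dio_pred n nw (m j) (nv j) A B (C j) (D j) (L j) (G j) wl wu (vl j) (vu j)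
              (fst (dio n nw m nv A B C D L G x0l x0u wl wu vl vu E d y k j))
              (snd (dio n nw m nv A B C D L G x0l x0u wl wu vl vu E d y k j))
              (y j k) (y j (Suc k))) r \<le> x (Suc k) r \<and>
            x (Suc k) r \<le> snd (dio_pred n nw (m j) (nv j) A B (C j) (D j) (L j) (G j) wl wu (vl j) (vu j)
              (fst (dio n nw m nv A B C D L G x0l x0u wl wu vl vu E d y k j))
              (snd (dio n nw m nv A B C D L G x0l x0u wl wu vl vu E d y k j))
              (y j k) (y j (Suc k))) r"
      proof (intro ballI allI impI)
        fix j r assume j: "j \<in> {1..N}" and r: "r < n"
        show "fst (dio_pred n nw (m j) (nv j) A B (C j) (D j) (L j) (G j) wl wu (vl j) (vu j)
              (fst (dio n nw m nv A B C D L G x0l x0u wl wu vl vu E d y k j))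
              (snd (dio n nw m nv A B C D L G x0l x0u wl wu vl vu E d y k j))
              (y j k) (y j (Suc k))) r \<le> x (Suc k) r \<and>
            x (Suc k) r \<le> snd (dio_pred n nw (m j) (nv j) A B (C j) (D j) (L j) (G j) wl wu (vl j) (vu j)
              (fst (dio n nw m nv A B C D L G x0l x0u wl wu vl vu E d y k j))
              (snd (dio n nw m nv A B C D L G x0l x0u wl wu vl vu E d y k j))
              (y j k) (y j (Suc k))) r"
          apply (rule pred_sound[where vk="v j k" and vkn="v j (Suc k)" and wk="w k" and xk="x k", OF r])
          using Suc.IH[OF j] w_bd v_bd j outp dyn by auto
      qed
    show ?case
      unfolding dio.simps using rounds_sound[OF graph X, of d] Suc.prems by blast
  qed
qed

end
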